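(* Let $p$ be an odd prime. Then $$\Psi^w_{\mathbb{Z}_p}(x)=\frac{2}{p-1}\sum_{d\mid\frac{p-1}{2}}\phi\!\left(\frac{p-1}{2d}\right)\left(\left(1+x^{\frac{p-1}{d}}\right)^{d}-1\right),$$ and hence $$\mathcal{E}^w(\mathbb{Z}_p)=\Psi^w_{\mathbb{Z}_p}(1)=\frac{2}{p-1}\sum_{d\mid\frac{p-1}{2}}\phi\!\left(\frac{p-1}{2d}\right)\left(2^d-1\right).$$
   Context: $\phi$ is Euler's totient function. For a finite group $\mathcal{A}$ with identity $e$, let $G(\mathcal{A})=\{\Omega\subseteq\mathcal{A}:\Omega^{-1}=\Omega,\ \langle\Omega\rangle=\mathcal{A},\ e\notin\Omega\}$. $\mathrm{Aut}(\mathcal{A})$ acts on $G(\mathcal{A})$ by $\alpha\cdot\Omega=\alpha(\Omega)$. For $k\ge1$ let $a^w_k(\mathcal{A})$ be the number of orbits of $\mathrm{Aut}(\mathcal{A})$ on $\{\Omega\in G(\mathcal{A}):|\Omega|=k\}$ (the number of weak equivalence classes of Cayley graphs $C(\mathcal{A},\Omega)$ of degree $k$); $\Psi^w_{\mathcal{A}}(x)=\sum_{k=1}^{|\mathcal{A}|-1}a^w_k(\mathcal{A})x^k$ and $\mathcal{E}^w(\mathcal{A})=\Psi^w_{\mathcal{A}}(1)$. *)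

theory Defs
  imports "HOL-Algebra.Algebra" "HOL-Number_Theory.Number_Theory"
begin

definition cayley_sets :: "('a, 'b) monoid_scheme \<Rightarrow> 'a set set" where
  "cayley_sets G = {S. S \<subseteq> carrier G \<and> (\<lambda>x. inv\<^bsub>G\<^esub> x) ` S = S \<and>
      generate G S = carrier G \<and> \<one>\<^bsub>G\<^esub> \<notin> S}"

definition aut_orbit :: "('a, 'b) monoid_scheme \<Rightarrow> 'a set \<Rightarrow> 'a set set" where
  "aut_orbit G S = {f ` S | f. f \<in> iso G G}"

definition weak_count :: "('a, 'b) monoid_scheme \<Rightarrow> nat \<Rightarrow> nat" where
  "weak_count G k = card (aut_orbit G ` {S \<in> cayley_sets G. card S = k})"

definition Psi_w :: "('a, 'b) monoid_scheme \<Rightarrow> real \<Rightarrow> real" where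
  "Psi_w G x = (\<Sum>k = 1..card (carrier G) - 1. real (weak_count G k) * x ^ k)"

definition E_w :: "('a, 'b) monoid_scheme \<Rightarrow> nat" where
  "E_w G = (\<Sum>k = 1..card (carrier G) - 1. weak_count G k)"

end

theory Submission
  imports Defs
begin

definition sh :: "nat \<Rightarrow> nat \<Rightarrow> nat \<Rightarrow> nat" where "sh n t k = (k + t) mod n"
definition orbs :: "nat \<Rightarrow> nat set \<Rightarrow> nat set set" where
  "orbs n T = {sh n t ` T | t. t < n}"

lemma sh_comp: "sh n t (sh n s k) = sh n ((s + t) mod n) k"
  by (simp add: sh_def mod_add_left_eq mod_add_right_eq add.assoc)

lemma sh_lt: "n > 0 \<Longrightarrow> sh n t k < n" by (simp add: sh_def)

lemma sh_inj: "inj_on (sh n t) {..<n}"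
proof
  fix x y assume "x \<in> {..<n}" "y \<in> {..<n}" "sh n t x = sh n t y"
  hence "[x + t = y + t] (mod n)" "x < n" "y < n" by (auto simp: sh_def cong_def)
  hence "[x = y] (mod n)" using cong_add_rcancel_nat by blast
  thus "x = y" using \<open>x < n\<close> \<open>y < n\<close> by (simp add: cong_def)
qed

lemma sh_0: "k < n \<Longrightarrow> sh n 0 k = k" by (simp add: sh_def)

lemma sh_mod: "sh n (t mod n) = sh n t"
  by (rule ext) (simp add: sh_def mod_add_right_eq)

lemma sh_img_comp: "sh n t ` sh n s ` T = sh n ((s + t) mod n) ` T"
  by (simp add: image_image sh_comp)

lemma sh_img_sub: "n > 0 \<Longrightarrow> sh n t ` T \<subseteq> {..<n}"
  using sh_lt by blast

lemma sh_img_eq_iff: "A \<subseteq> {..<n} \<Longrightarrow> B \<subseteq> {..<n} \<Longrightarrow> sh n t ` A = sh n t ` B \<longleftrightarrow> A = B"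
  by (rule inj_on_image_eq_iff[OF sh_inj])

lemma sh_img_0: "T \<subseteq> {..<n} \<Longrightarrow> sh n 0 ` T = T"
proof -
  assume T: "T \<subseteq> {..<n}"
  have "sh n 0 ` T = id ` T" by (rule image_cong) (use T sh_0 in auto)
  thus ?thesis by simp
qed

lemma sh_img_card: "T \<subseteq> {..<n} \<Longrightarrow> card (sh n t ` T) = card T"
  by (rule card_image) (meson inj_on_subset sh_inj)


lemma stab_shift:
  assumes "n > 0" "T \<subseteq> {..<n}"
  shows "sh n t ` (sh n s ` T) = sh n s ` T \<longleftrightarrow> sh n t ` T = T"
proof -
  have "sh n t ` (sh n s ` T) = sh n s ` (sh n t ` T)"
    by (simp add: sh_img_comp add.commute)
  thus ?thesis using sh_img_eq_iff[of "sh n t ` T" n T s] sh_img_sub[OF assms(1)] assms(2)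
    by auto
qed


lemma orbs_shift:
  assumes "n > 0" "T \<subseteq> {..<n}" "s < n"
  shows "orbs n (sh n s ` T) = orbs n T"
proof
  show "orbs n (sh n s ` T) \<subseteq> orbs n T"
  proof
    fix Z assume "Z \<in> orbs n (sh n s ` T)"
    then obtain t where "t < n" "Z = sh n t ` sh n s ` T" by (auto simp: orbs_def)
    hence "Z = sh n ((s + t) mod n) ` T" by (simp add: sh_img_comp)
    thus "Z \<in> orbs n T" using assms(1) by (auto simp: orbs_def)
  qed
  show "orbs n T \<subseteq> orbs n (sh n s ` T)"
  proof
    fix Z assume "Z \<in> orbs n T"
    then obtain t where t: "t < n" "Z = sh n t ` T" by (auto simp: orbs_def)
    define u where "u = (t + (n - s)) mod n"
    have "(s + u) mod n = t mod n" unfolding u_def using assms(3)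
      by (simp add: mod_add_right_eq)
    hence "sh n ((s + u) mod n) = sh n t" by (metis sh_mod)
    hence "sh n u ` sh n s ` T = Z" using t by (simp add: sh_img_comp)
    moreover have "u < n" using assms(1) by (simp add: u_def)
    ultimately show "Z \<in> orbs n (sh n s ` T)" by (auto simp: orbs_def)
  qed
qed


lemma fiber_card:
  assumes "n > 0" "T \<subseteq> {..<n}" "s < n"
  shows "card {t. t < n \<and> sh n t ` T = sh n s ` T} = card {t. t < n \<and> sh n t ` T = T}"
proof -
  let ?f = "\<lambda>u. (u + s) mod n"
  have "?f ` {t. t < n \<and> sh n t ` T = T} = {t. t < n \<and> sh n t ` T = sh n s ` T}"
  proof (intro equalityI subsetI)
    fix x assume "x \<in> ?f ` {t. t < n \<and> sh n t ` T = T}"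
    then obtain u where u: "u < n" "sh n u ` T = T" "x = (u + s) mod n" by auto
    have "sh n s ` sh n u ` T = sh n x ` T" using u(3) by (simp add: sh_img_comp)
    hence "sh n x ` T = sh n s ` T" using u(2) by simp
    moreover have "x < n" using u(3) assms(1) by simp
    ultimately show "x \<in> {t. t < n \<and> sh n t ` T = sh n s ` T}" by simp
  next
    fix x assume x: "x \<in> {t. t < n \<and> sh n t ` T = sh n s ` T}"
    define u where "u = (x + (n - s)) mod n"
    have "(u + s) mod n = x mod n" unfolding u_def using assms(3)
      by (simp add: mod_add_left_eq)
    hence ux: "(u + s) mod n = x" using x by simp
    have "sh n s ` sh n u ` T = sh n ((u + s) mod n) ` T" by (rule sh_img_comp)
    also have "\<dots> = sh n s ` T" using ux x by simp
    finally have "sh n s ` (sh n u ` T) = sh n s ` T" .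
    hence "sh n u ` T = T"
      using sh_img_eq_iff[of "sh n u ` T" n T s] sh_img_sub[OF assms(1)] assms(2) by blast
    moreover have "u < n" using assms(1) by (simp add: u_def)
    ultimately have "u \<in> {t. t < n \<and> sh n t ` T = T}" by simp
    thus "x \<in> ?f ` {t. t < n \<and> sh n t ` T = T}" by (rule image_eqI[where f="?f", OF ux[symmetric]])
  qed
  moreover have "inj_on ?f {t. t < n \<and> sh n t ` T = T}"
  proof
    fix a b assume "a \<in> {t. t < n \<and> sh n t ` T = T}" "b \<in> {t. t < n \<and> sh n t ` T = T}"
      "(a + s) mod n = (b + s) mod n"
    hence "a \<in> {..<n}" "b \<in> {..<n}" "sh n s a = sh n s b" by (auto simp: sh_def)
    thus "a = b" using inj_onD[OF sh_inj] by blast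
  qed
  ultimately show ?thesis using card_image[of ?f "{t. t < n \<and> sh n t ` T = T}"] by simp
qed

lemma card_filter_sum: "finite A \<Longrightarrow> card {x\<in>A. P x} = (\<Sum>x\<in>A. if P x then 1 else 0)"
  by (simp add: sum.inter_filter[symmetric])

lemma orbs_self: "T \<subseteq> {..<n} \<Longrightarrow> n > 0 \<Longrightarrow> T \<in> orbs n T"
  unfolding orbs_def using sh_img_0[of T n] by force

lemma orbs_sum_stab:
  assumes n0: "n > 0" and T0: "T0 \<subseteq> {..<n}"
  shows "(\<Sum>T\<in>orbs n T0. card {t. t < n \<and> sh n t ` T = T}) = n"
proof -
  have fin: "finite (orbs n T0)"
  proof -
    have "orbs n T0 = (\<lambda>t. sh n t ` T0) ` {..<n}" by (auto simp: orbs_def)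
    thus ?thesis by simp
  qed
  have eq: "card {t. t < n \<and> sh n t ` T = T} = card {t \<in> {..<n}. sh n t ` T0 = T}"
    if "T \<in> orbs n T0" for T
  proof -
    from that obtain s where s: "s < n" "T = sh n s ` T0" unfolding orbs_def by blast
    have "{t. t < n \<and> sh n t ` T = T} = {t. t < n \<and> sh n t ` T0 = T0}"
      using stab_shift[OF n0 T0] s by auto
    also have "card \<dots> = card {t. t < n \<and> sh n t ` T0 = sh n s ` T0}"
      using fiber_card[OF n0 T0 s(1)] by simp
    also have "{t. t < n \<and> sh n t ` T0 = sh n s ` T0} = {t \<in> {..<n}. sh n t ` T0 = T}"
      using s by auto
    finally show ?thesis .
  qed
  have "(\<Sum>T\<in>orbs n T0. card {t. t < n \<and> sh n t ` T = T})
      = (\<Sum>T\<in>orbs n T0. \<Sum>t\<in>{t \<in> {..<n}. sh n t ` T0 = T}. 1)"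
    using eq by simp
  also have "\<dots> = (\<Sum>t\<in>{..<n}. 1)"
    by (rule sum.group[OF finite_lessThan fin]) (auto simp: orbs_def)
  finally show ?thesis by simp
qed

lemma burnside:
  assumes n0: "n > 0" and Z: "Z \<subseteq> Pow {..<n}" and cl: "\<forall>T\<in>Z. \<forall>t<n. sh n t ` T \<in> Z"
  shows "card (orbs n ` Z) * n = (\<Sum>t<n. card {T\<in>Z. sh n t ` T = T})"
proof -
  have finZ: "finite Z" using Z finite_subset by (metis finite_Pow_iff finite_lessThan)
  have "(\<Sum>t<n. card {T\<in>Z. sh n t ` T = T})
      = (\<Sum>t<n. \<Sum>T\<in>Z. if sh n t ` T = T then 1 else 0)"
    using finZ by (simp add: card_filter_sum)
  also have "\<dots> = (\<Sum>T\<in>Z. \<Sum>t<n. if sh n t ` T = T then 1 else 0)"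
    by (rule sum.swap)
  also have "\<dots> = (\<Sum>T\<in>Z. card {t. t < n \<and> sh n t ` T = T})"
  proof (rule sum.cong[OF refl])
    fix T
    have "card {t. t < n \<and> sh n t ` T = T} = card {t\<in>{..<n}. sh n t ` T = T}"
      by (intro arg_cong[where f=card]) auto
    thus "(\<Sum>t<n. if sh n t ` T = T then 1 else 0) = card {t. t < n \<and> sh n t ` T = T}"
      using card_filter_sum[of "{..<n}" "\<lambda>t. sh n t ` T = T"] by simp
  qed
  also have "\<dots> = (\<Sum>Q\<in>orbs n ` Z. \<Sum>T\<in>{T\<in>Z. orbs n T = Q}. card {t. t < n \<and> sh n t ` T = T})"
    by (rule sum.group[symmetric]) (use finZ in auto)
  also have "\<dots> = (\<Sum>Q\<in>orbs n ` Z. n)"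
  proof (rule sum.cong[OF refl])
    fix Q assume "Q \<in> orbs n ` Z"
    then obtain T0 where T0: "T0 \<in> Z" "Q = orbs n T0" by auto
    have T0s: "T0 \<subseteq> {..<n}" using T0 Z by auto
    have "{T\<in>Z. orbs n T = Q} = orbs n T0"
    proof (intro equalityI subsetI)
      fix T assume "T \<in> {T\<in>Z. orbs n T = Q}"
      hence "T \<in> Z" "orbs n T = orbs n T0" using T0 by auto
      moreover have "T \<subseteq> {..<n}" using \<open>T \<in> Z\<close> Z by auto
      ultimately show "T \<in> orbs n T0" using orbs_self[of T n] n0 by auto
    next
      fix T assume "T \<in> orbs n T0"
      then obtain s where s: "s < n" "T = sh n s ` T0" by (auto simp: orbs_def)
      have "T \<in> Z" using cl T0(1) s by auto
      moreover have "orbs n T = Q" using orbs_shift[OF n0 T0s s(1)] s T0 by simp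
      ultimately show "T \<in> {T\<in>Z. orbs n T = Q}" by simp
    qed
    thus "(\<Sum>T\<in>{T\<in>Z. orbs n T = Q}. card {t. t < n \<and> sh n t ` T = T}) = n"
      using orbs_sum_stab[OF n0 T0s] T0 by simp
  qed
  finally show ?thesis by simp
qed

definition shinv :: "nat \<Rightarrow> nat \<Rightarrow> nat set \<Rightarrow> bool" where
  "shinv n t T \<longleftrightarrow> (\<forall>k<n. k \<in> T \<longleftrightarrow> sh n t k \<in> T)"

lemma shinv_iff:
  assumes n0: "n > 0" and T: "T \<subseteq> {..<n}"
  shows "sh n t ` T = T \<longleftrightarrow> shinv n t T"
proof
  assume eq: "sh n t ` T = T"
  show "shinv n t T" unfolding shinv_def
  proof (intro allI impI iffI)
    fix k assume "k < n" "k \<in> T"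
    thus "sh n t k \<in> T" using eq by blast
  next
    fix k assume k: "k < n" "sh n t k \<in> T"
    then obtain k' where k': "k' \<in> T" "sh n t k' = sh n t k" using eq by (metis imageE)
    have "k' = k" using inj_onD[OF sh_inj k'(2)] k'(1) T k(1) by auto
    thus "k \<in> T" using k' by simp
  qed
next
  assume inv: "shinv n t T"
  have sub: "sh n t ` T \<subseteq> T" using inv T unfolding shinv_def by auto
  have fin: "finite T" using T finite_subset by blast
  show "sh n t ` T = T"
    by (rule card_subset_eq[OF fin sub]) (rule sh_img_card[OF T])
qed

lemma shinv_iter:
  assumes "shinv n t T" "k < n"
  shows "k \<in> T \<longleftrightarrow> (k + j * t) mod n \<in> T"
proof (induction j)
  case 0 then show ?case using assms(2) by simp
next
  case (Suc j)
  have n0: "n > 0" using assms(2) by simp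
  have "sh n t ((k + j * t) mod n) = (k + j * t + t) mod n"
    by (simp add: sh_def mod_add_left_eq)
  moreover have "k + Suc j * t = k + j * t + t" by simp
  ultimately have "(k + Suc j * t) mod n = sh n t ((k + j * t) mod n)" by (simp only:)
  moreover have "(k + j * t) mod n < n" using n0 by simp
  ultimately show ?case using Suc assms(1) unfolding shinv_def by simp
qed

lemma shinv_gcd:
  assumes n: "n = 2 * m" and m0: "m > 0" and T: "T \<subseteq> {..<n}"
  shows "shinv n t T \<and> shinv n m T \<longleftrightarrow> shinv n (gcd t m) T"
proof
  assume A: "shinv n t T \<and> shinv n m T"
  show "shinv n (gcd t m) T"
  proof (cases "t = 0")
    case True thus ?thesis using A by simp
  next
    case False
    obtain a b where ab: "t * a = m * b + gcd t m" using bezout_nat[OF False] by blast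
    show ?thesis unfolding shinv_def
    proof (intro allI impI)
      fix k assume k: "k < n"
      have "k \<in> T \<longleftrightarrow> (k + a * t) mod n \<in> T" using shinv_iter[of n t T k a] A k by simp
      also have "\<dots> \<longleftrightarrow> ((k + a * t) mod n + b * m) mod n \<in> T"
        using shinv_iter[of n m T "(k + a * t) mod n" b] A k by simp
      also have "((k + a * t) mod n + b * m) mod n = (k + gcd t m + b * n) mod n"
      proof -
        have "((k + a * t) mod n + b * m) mod n = (k + a * t + b * m) mod n"
          by (simp add: mod_add_left_eq)
        also have "k + a * t + b * m = k + gcd t m + b * n"
          using ab n by (simp add: algebra_simps)
        finally show ?thesis .
      qed
      also have "(k + gcd t m + b * n) mod n = sh n (gcd t m) k"
        by (simp add: sh_def)
      finally show "k \<in> T \<longleftrightarrow> sh n (gcd t m) k \<in> T" .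
    qed
  qed
next
  assume D: "shinv n (gcd t m) T"
  have gen: "shinv n s T" if "gcd t m dvd s" for s
    unfolding shinv_def
  proof (intro allI impI)
    fix k assume k: "k < n"
    from that obtain j where j: "s = gcd t m * j" by (rule dvdE)
    show "k \<in> T \<longleftrightarrow> sh n s k \<in> T"
      using shinv_iter[OF D k, of j] j by (simp add: sh_def mult.commute)
  qed
  show "shinv n t T \<and> shinv n m T" using gen by simp
qed

definition cls :: "nat \<Rightarrow> nat \<Rightarrow> nat set \<Rightarrow> nat set" where
  "cls n d R = {k\<in>{..<n}. k mod d \<in> R}"

lemma shinv_cls:
  assumes d: "d dvd n" "d > 0" and n0: "n > 0" and T: "T \<subseteq> {..<n}"
  shows "shinv n d T \<longleftrightarrow> (\<exists>R\<in>Pow {..<d}. T = cls n d R)"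
proof
  assume D: "shinv n d T"
  have dn: "d \<le> n" using d n0 by (simp add: dvd_imp_le)
  have "T = cls n d (T \<inter> {..<d})"
  proof (intro equalityI subsetI)
    fix k assume k: "k \<in> T"
    hence "k < n" using T by auto
    have "k mod d < d" using d by simp
    hence km: "k mod d < n" using dn by linarith
    have "(k mod d + (k div d) * d) mod n = k" using \<open>k < n\<close> by simp
    hence "k mod d \<in> T" using shinv_iter[OF D km, of "k div d"] k by simp
    thus "k \<in> cls n d (T \<inter> {..<d})" using \<open>k < n\<close> d by (simp add: cls_def)
  next
    fix k assume k: "k \<in> cls n d (T \<inter> {..<d})"
    hence kn: "k < n" and kt: "k mod d \<in> T" by (auto simp: cls_def)
    have "k mod d < d" using d by simp
    hence km: "k mod d < n" using dn by linarith
    have "(k mod d + (k div d) * d) mod n = k" using kn by simp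
    thus "k \<in> T" using shinv_iter[OF D km, of "k div d"] kt by simp
  qed
  thus "\<exists>R\<in>Pow {..<d}. T = cls n d R" by blast
next
  assume "\<exists>R\<in>Pow {..<d}. T = cls n d R"
  then obtain R where R: "T = cls n d R" by blast
  show "shinv n d T" unfolding shinv_def
  proof (intro allI impI)
    fix k assume "k < n"
    have "sh n d k mod d = k mod d"
      using d by (simp add: sh_def mod_mod_cancel)
    moreover have "sh n d k < n" using n0 by (simp add: sh_def)
    ultimately show "k \<in> T \<longleftrightarrow> sh n d k \<in> T" using \<open>k < n\<close> R by (simp add: cls_def)
  qed
qed


lemma cls_card:
  assumes d: "d dvd n" "d > 0" and R: "R \<subseteq> {..<d}"
  shows "card (cls n d R) = card R * (n div d)"
proof -
  let ?f = "\<lambda>(r, q). r + q * d"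
  have nd: "n = (n div d) * d" using d by simp
  have "?f ` (R \<times> {..<n div d}) = cls n d R"
  proof (intro equalityI subsetI)
    fix k assume "k \<in> ?f ` (R \<times> {..<n div d})"
    then obtain r q where rq: "r \<in> R" "q < n div d" "k = r + q * d" by auto
    have "r < d" using rq R by auto
    have "Suc q \<le> n div d" using rq by simp
    hence "Suc q * d \<le> (n div d) * d" by (rule mult_le_mono1)
    hence "k < n" using rq \<open>r < d\<close> nd by simp
    moreover have "k mod d = r" using rq \<open>r < d\<close> by simp
    ultimately show "k \<in> cls n d R" using rq by (simp add: cls_def)
  next
    fix k assume "k \<in> cls n d R"
    hence k: "k < n" "k mod d \<in> R" by (auto simp: cls_def)
    have "(k div d) * d \<le> k" using div_mult_mod_eq[of k d] by linarith
    hence "(k div d) * d < (n div d) * d" using k nd by linarith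
    hence "k div d < n div d" by (rule mult_less_cancel2[THEN iffD1, THEN conjunct2])
    moreover have "k = k mod d + (k div d) * d" by simp
    ultimately show "k \<in> ?f ` (R \<times> {..<n div d})" using k(2)
      by (intro image_eqI[where x="(k mod d, k div d)"]) auto
  qed
  moreover have "inj_on ?f (R \<times> {..<n div d})"
  proof (rule inj_onI)
    fix a b assume a: "a \<in> R \<times> {..<n div d}" and b: "b \<in> R \<times> {..<n div d}" and eq: "?f a = ?f b"
    obtain r1 q1 where 1: "a = (r1, q1)" by (cases a)
    obtain r2 q2 where 2: "b = (r2, q2)" by (cases b)
    have "r1 < d" "r2 < d" using a b 1 2 R by auto
    have e: "r1 + q1 * d = r2 + q2 * d" using eq 1 2 by simp
    have "r1 = r2" using arg_cong[OF e, of "\<lambda>x. x mod d"] \<open>r1 < d\<close> \<open>r2 < d\<close> by simp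
    moreover have "q1 = q2" using arg_cong[OF e, of "\<lambda>x. x div d"] \<open>r1 < d\<close> \<open>r2 < d\<close> d by simp
    ultimately show "a = b" using 1 2 by simp
  qed
  ultimately have "card (cls n d R) = card (R \<times> {..<n div d})" by (metis card_image)
  also have "\<dots> = card R * (n div d)" by (simp add: card_cartesian_product)
  finally show ?thesis .
qed

lemma pow_sum:
  fixes y :: real
  shows "finite A \<Longrightarrow> (\<Sum>R\<in>Pow A. y ^ card R) = (1 + y) ^ card A"
proof (induction A rule: finite_induct)
  case empty thus ?case by simp
next
  case (insert a A)
  have disj: "Pow A \<inter> insert a ` Pow A = {}" using insert by auto
  have inj: "inj_on (insert a) (Pow A)"
    by (rule inj_onI) (use insert in \<open>auto simp: insert_ident\<close>)
  have "(\<Sum>R\<in>Pow (insert a A). y ^ card R) = (\<Sum>R\<in>Pow A. y ^ card R) + (\<Sum>R\<in>insert a ` Pow A. y ^ card R)"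
    unfolding Pow_insert using insert disj by (intro sum.union_disjoint) auto
  also have "(\<Sum>R\<in>insert a ` Pow A. y ^ card R) = (\<Sum>R\<in>Pow A. y ^ card (insert a R))"
    by (rule sum.reindex[OF inj, unfolded comp_def])
  also have "\<dots> = (\<Sum>R\<in>Pow A. y * y ^ card R)"
  proof (rule sum.cong[OF refl])
    fix R assume "R \<in> Pow A"
    hence "finite R" "a \<notin> R" using insert finite_subset by auto
    thus "y ^ card (insert a R) = y * y ^ card R" by simp
  qed
  also have "\<dots> = y * (1 + y) ^ card A" by (simp add: sum_distrib_left[symmetric] insert.IH)
  finally show ?case using insert by (simp add: algebra_simps)
qed

lemma fix_sum:
  fixes x :: real
  assumes n: "n = 2 * m" and m0: "m > 0"
  shows "(\<Sum>T\<in>{T. T \<subseteq> {..<n} \<and> T \<noteq> {} \<and> sh n m ` T = T \<and> sh n t ` T = T}. x ^ card T)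
         = (1 + x ^ (n div gcd t m)) ^ gcd t m - 1"
proof -
  define d where "d = gcd t m"
  have n0: "n > 0" using n m0 by simp
  have d0: "d > 0" using m0 by (simp add: d_def)
  have dn: "d dvd n" using n by (simp add: d_def)
  have dle: "d \<le> n" using dn n0 by (simp add: dvd_imp_le)
  have clsub: "cls n d R \<subseteq> {..<n}" for R by (auto simp: cls_def)
  have set: "{T. T \<subseteq> {..<n} \<and> T \<noteq> {} \<and> sh n m ` T = T \<and> sh n t ` T = T} = cls n d ` Pow {..<d} - {{}}"
  proof (intro equalityI subsetI)
    fix T assume "T \<in> {T. T \<subseteq> {..<n} \<and> T \<noteq> {} \<and> sh n m ` T = T \<and> sh n t ` T = T}"
    hence T: "T \<subseteq> {..<n}" "T \<noteq> {}" "sh n m ` T = T" "sh n t ` T = T" by auto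
    hence "shinv n t T \<and> shinv n m T" using shinv_iff[OF n0] by blast
    hence "shinv n d T" using shinv_gcd[OF n m0 T(1)] by (simp add: d_def)
    then obtain R where "R \<in> Pow {..<d}" "T = cls n d R" using shinv_cls[OF dn d0 n0 T(1)] by blast
    thus "T \<in> cls n d ` Pow {..<d} - {{}}" using T(2) by blast
  next
    fix T assume "T \<in> cls n d ` Pow {..<d} - {{}}"
    then obtain R where R: "R \<in> Pow {..<d}" "T = cls n d R" "T \<noteq> {}" by blast
    have Ts: "T \<subseteq> {..<n}" using R clsub by simp
    have "shinv n d T" using shinv_cls[OF dn d0 n0 Ts] R by blast
    hence "shinv n t T \<and> shinv n m T" using shinv_gcd[OF n m0 Ts] by (simp add: d_def)
    hence "sh n m ` T = T" "sh n t ` T = T" using shinv_iff[OF n0 Ts] by blast+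
    thus "T \<in> {T. T \<subseteq> {..<n} \<and> T \<noteq> {} \<and> sh n m ` T = T \<and> sh n t ` T = T}" using Ts R by blast
  qed
  have inj: "inj_on (cls n d) (Pow {..<d})"
  proof (rule inj_onI)
    fix A B assume A: "A \<in> Pow {..<d}" and B: "B \<in> Pow {..<d}" and eq: "cls n d A = cls n d B"
    have "cls n d A \<inter> {..<d} = A" if "A \<subseteq> {..<d}" for A
      using that dle by (auto simp: cls_def)
    thus "A = B" using A B eq by (metis PowD)
  qed
  have emp: "{} \<in> cls n d ` Pow {..<d}" by (auto simp: cls_def intro!: image_eqI[where x="{}"])
  have "(\<Sum>T\<in>cls n d ` Pow {..<d}. x ^ card T) = (\<Sum>R\<in>Pow {..<d}. x ^ card (cls n d R))"
    by (rule sum.reindex[OF inj, unfolded comp_def])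
  also have "\<dots> = (\<Sum>R\<in>Pow {..<d}. (x ^ (n div d)) ^ card R)"
  proof (rule sum.cong[OF refl])
    fix R assume "R \<in> Pow {..<d}"
    hence "card (cls n d R) = card R * (n div d)" using cls_card[OF dn d0] by simp
    thus "x ^ card (cls n d R) = (x ^ (n div d)) ^ card R"
      by (simp add: power_mult[symmetric] mult.commute)
  qed
  also have "\<dots> = (1 + x ^ (n div d)) ^ d" by (simp add: pow_sum)
  finally have S: "(\<Sum>T\<in>cls n d ` Pow {..<d}. x ^ card T) = (1 + x ^ (n div d)) ^ d" .
  show ?thesis unfolding set d_def[symmetric]
    using S emp by (simp add: sum_diff1)
qed


lemma gcd_sum:
  fixes f :: "nat \<Rightarrow> real"
  assumes m0: "m > 0"
  shows "(\<Sum>t<2*m. f (gcd t m)) = 2 * (\<Sum>d | d dvd m. real (totient (m div d)) * f d)"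
proof -
  have "(\<Sum>t<2*m. f (gcd t m)) = (\<Sum>t\<in>{0..<m}. f (gcd t m)) + (\<Sum>t\<in>{m..<2*m}. f (gcd t m))"
    by (simp add: sum.atLeastLessThan_concat atLeast0LessThan[symmetric])
  also have "(\<Sum>t\<in>{m..<2*m}. f (gcd t m)) = (\<Sum>t\<in>{0..<m}. f (gcd (t + m) m))"
    using sum.shift_bounds_nat_ivl[of "\<lambda>t. f (gcd t m)" 0 m m] by (simp add: mult_2)
  also have "\<dots> = (\<Sum>t\<in>{0..<m}. f (gcd t m))" by simp
  finally have A: "(\<Sum>t<2*m. f (gcd t m)) = 2 * (\<Sum>t\<in>{0..<m}. f (gcd t m))" by simp
  have B: "(\<Sum>t\<in>{0..<m}. f (gcd t m)) = (\<Sum>t\<in>{0<..m}. f (gcd t m))"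
    by (rule sum.reindex_bij_witness[where i="\<lambda>b. if b = m then 0 else b" and j="\<lambda>a. if a = 0 then m else a"])
       (use m0 in auto)
  have G: "(\<Sum>d | d dvd m. \<Sum>t\<in>{t\<in>{0<..m}. gcd t m = d}. f (gcd t m)) = (\<Sum>t\<in>{0<..m}. f (gcd t m))"
    by (rule sum.group) (use m0 in auto)
  have I: "(\<Sum>t\<in>{t\<in>{0<..m}. gcd t m = d}. f (gcd t m)) = real (totient (m div d)) * f d"
    if "d dvd m" for d
  proof -
    have "(\<Sum>t\<in>{t\<in>{0<..m}. gcd t m = d}. f (gcd t m)) = (\<Sum>t\<in>{t\<in>{0<..m}. gcd t m = d}. f d)"
      by (rule sum.cong) auto
    also have "\<dots> = real (card {t\<in>{0<..m}. gcd t m = d}) * f d" by simp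
    also have "card {t\<in>{0<..m}. gcd t m = d} = totient (m div d)"
      using card_gcd_eq_totient[OF m0 that] .
    finally show ?thesis .
  qed
  have C: "(\<Sum>t\<in>{0<..m}. f (gcd t m)) = (\<Sum>d | d dvd m. real (totient (m div d)) * f d)"
    unfolding G[symmetric] by (rule sum.cong[OF refl]) (rule I, simp)
  show ?thesis using A B C by simp
qed

definition Ys :: "nat \<Rightarrow> nat \<Rightarrow> nat set set" where
  "Ys n m = {T. T \<subseteq> {..<n} \<and> T \<noteq> {} \<and> sh n m ` T = T}"

lemma Ys_closed:
  assumes n0: "n > 0" and T: "T \<in> Ys n m" and t: "t < n"
  shows "sh n t ` T \<in> Ys n m" and "card (sh n t ` T) = card T"
proof -
  have Ts: "T \<subseteq> {..<n}" "T \<noteq> {}" "sh n m ` T = T" using T by (auto simp: Ys_def)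
  have "sh n m ` sh n t ` T = sh n t ` sh n m ` T" by (simp add: sh_img_comp add.commute)
  thus "sh n t ` T \<in> Ys n m" using Ts sh_img_sub[OF n0] by (auto simp: Ys_def)
  show "card (sh n t ` T) = card T" using sh_img_card[OF Ts(1)] .
qed

lemma comb_main:
  fixes x :: real
  assumes n: "n = 2 * m" and m0: "m > 0"
  shows "(\<Sum>k=1..n. real (card (orbs n ` {T\<in>Ys n m. card T = k})) * x ^ k)
       = 2 / real n * (\<Sum>d | d dvd m. real (totient (m div d)) * ((1 + x ^ (n div d)) ^ d - 1))"
proof -
  have n0: "n > 0" using n m0 by simp
  define F where "F t = {T. T \<subseteq> {..<n} \<and> T \<noteq> {} \<and> sh n m ` T = T \<and> sh n t ` T = T}" for t
  have bk: "real (card (orbs n ` {T\<in>Ys n m. card T = k})) =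
      (\<Sum>t<n. real (card {T\<in>F t. card T = k})) / real n" for k
  proof -
    have "card (orbs n ` {T\<in>Ys n m. card T = k}) * n = (\<Sum>t<n. card {T\<in>{T\<in>Ys n m. card T = k}. sh n t ` T = T})"
    proof (rule burnside[OF n0])
      show "{T\<in>Ys n m. card T = k} \<subseteq> Pow {..<n}" by (auto simp: Ys_def)
      show "\<forall>T\<in>{T\<in>Ys n m. card T = k}. \<forall>t<n. sh n t ` T \<in> {T\<in>Ys n m. card T = k}"
        using Ys_closed[OF n0] by auto
    qed
    also have "\<dots> = (\<Sum>t<n. card {T\<in>F t. card T = k})"
      by (intro sum.cong refl arg_cong[where f=card]) (auto simp: F_def Ys_def)
    finally have eq: "card (orbs n ` {T\<in>Ys n m. card T = k}) * n = (\<Sum>t<n. card {T\<in>F t. card T = k})" .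
    have "real (card (orbs n ` {T\<in>Ys n m. card T = k})) * real n = (\<Sum>t<n. real (card {T\<in>F t. card T = k}))"
      using arg_cong[where f=real, OF eq] by simp
    thus ?thesis using n0 by (simp add: field_simps)
  qed
  have finF: "finite (F t)" for t
  proof -
    have "F t \<subseteq> Pow {..<n}" by (auto simp: F_def)
    thus ?thesis by (rule finite_subset) simp
  qed
  have cardF: "card ` F t \<subseteq> {1..n}" for t
  proof
    fix c assume "c \<in> card ` F t"
    then obtain T where T: "T \<in> F t" "c = card T" by auto
    have "T \<subseteq> {..<n}" "T \<noteq> {}" using T by (auto simp: F_def)
    moreover have "finite T" using \<open>T \<subseteq> {..<n}\<close> finite_subset by blast
    ultimately have "card T \<ge> 1" "card T \<le> n"
      using card_mono[of "{..<n}" T] by (auto simp: Suc_le_eq card_gt_0_iff)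
    thus "c \<in> {1..n}" using T by simp
  qed
  have inner: "(\<Sum>k=1..n. real (card {T\<in>F t. card T = k}) * x ^ k) = (\<Sum>T\<in>F t. x ^ card T)" for t
  proof -
    have "(\<Sum>k=1..n. real (card {T\<in>F t. card T = k}) * x ^ k) = (\<Sum>k=1..n. \<Sum>T\<in>{T\<in>F t. card T = k}. x ^ card T)"
      by (rule sum.cong[OF refl]) simp
    also have "\<dots> = (\<Sum>T\<in>F t. x ^ card T)"
      by (rule sum.group[OF finF _ cardF]) simp
    finally show ?thesis .
  qed
  have "(\<Sum>k=1..n. real (card (orbs n ` {T\<in>Ys n m. card T = k})) * x ^ k)
      = (\<Sum>k=1..n. (\<Sum>t<n. real (card {T\<in>F t. card T = k}) * x ^ k) / real n)"
    by (rule sum.cong[OF refl]) (simp add: bk sum_distrib_right)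
  also have "\<dots> = (\<Sum>k=1..n. (\<Sum>t<n. real (card {T\<in>F t. card T = k}) * x ^ k)) / real n"
    by (rule sum_divide_distrib[symmetric])
  also have "\<dots> = (\<Sum>t<n. \<Sum>k=1..n. real (card {T\<in>F t. card T = k}) * x ^ k) / real n"
    by (subst sum.swap) simp
  also have "\<dots> = (\<Sum>t<n. (1 + x ^ (n div gcd t m)) ^ gcd t m - 1) / real n"
  proof -
    have "(\<Sum>k=1..n. real (card {T\<in>F t. card T = k}) * x ^ k) = (1 + x ^ (n div gcd t m)) ^ gcd t m - 1" for t
      unfolding inner unfolding F_def by (rule fix_sum[OF n m0])
    thus ?thesis by simp
  qed
  also have "(\<Sum>t<n. (1 + x ^ (n div gcd t m)) ^ gcd t m - 1) =
      2 * (\<Sum>d | d dvd m. real (totient (m div d)) * ((1 + x ^ (n div d)) ^ d - 1))"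
    using gcd_sum[OF m0, of "\<lambda>d. (1 + x ^ (n div d)) ^ d - 1"] n by simp
  finally show ?thesis by simp
qed


lemma carrier_imgp: "carrier (integer_mod_group p) = {0..<int p}" if "p > 0"
  using that by (simp add: carrier_integer_mod_group)

lemma mulmap_inj:
  assumes p: "Factorial_Ring.prime p" and a: "a \<in> {1..<int p}"
  shows "inj_on (\<lambda>x. a * x mod int p) {0..<int p}"
proof (rule inj_onI)
  fix x y assume x: "x \<in> {0..<int p}" and y: "y \<in> {0..<int p}" and e: "a * x mod int p = a * y mod int p"
  have pi: "Factorial_Ring.prime (int p)" using p by simp
  have "\<not> int p dvd a" using a by (auto dest: zdvd_imp_le)
  hence cop: "coprime (int p) a" using prime_imp_coprime[OF pi] by blast
  have "[a * x = a * y] (mod int p)" using e by (simp add: cong_def)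
  hence "[x = y] (mod int p)" using cong_mult_lcancel[of a "int p"] cop
    by (simp add: coprime_commute)
  thus "x = y" using x y by (simp add: cong_def)
qed

lemma mulmap_surj:
  assumes p: "Factorial_Ring.prime p" and a: "a \<in> {1..<int p}"
  shows "(\<lambda>x. a * x mod int p) ` {0..<int p} = {0..<int p}"
proof (rule endo_inj_surj)
  have p0: "int p > 0" using prime_gt_0_nat[OF p] by simp
  show "(\<lambda>x. a * x mod int p) ` {0..<int p} \<subseteq> {0..<int p}"
  proof
    fix y assume "y \<in> (\<lambda>x. a * x mod int p) ` {0..<int p}"
    then obtain x where "y = a * x mod int p" by blast
    thus "y \<in> {0..<int p}" using p0 by simp
  qed
  show "finite {0..<int p}" by simp
  show "inj_on (\<lambda>x. a * x mod int p) {0..<int p}" by (rule mulmap_inj[OF assms])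
qed

lemma mulmap_iso:
  assumes p: "Factorial_Ring.prime p" and a: "a \<in> {1..<int p}"
  shows "(\<lambda>x. a * x mod int p) \<in> iso (integer_mod_group p) (integer_mod_group p)"
proof -
  have p0: "p > 0" using prime_gt_0_nat[OF p] .
  have hom: "(\<lambda>x. a * x mod int p) \<in> hom (integer_mod_group p) (integer_mod_group p)"
    unfolding hom_def
  proof (intro CollectI conjI)
    show "(\<lambda>x. a * x mod int p) \<in> carrier (integer_mod_group p) \<rightarrow> carrier (integer_mod_group p)"
    proof (rule Pi_I)
      fix x show "a * x mod int p \<in> carrier (integer_mod_group p)" using p0 by (simp add: carrier_imgp)
    qed
    show "\<forall>x\<in>carrier (integer_mod_group p). \<forall>y\<in>carrier (integer_mod_group p).
      a * (x \<otimes>\<^bsub>integer_mod_group p\<^esub> y) mod int p =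
      (a * x mod int p) \<otimes>\<^bsub>integer_mod_group p\<^esub> (a * y mod int p)"
    proof (intro ballI)
      fix x y
      have "a * ((x + y) mod int p) mod int p = a * (x + y) mod int p" by (rule mod_mult_right_eq)
      also have "\<dots> = (a * x + a * y) mod int p" by (simp add: distrib_left)
      also have "\<dots> = (a * x mod int p + a * y mod int p) mod int p" by (rule mod_add_eq[symmetric])
      finally show "a * (x \<otimes>\<^bsub>integer_mod_group p\<^esub> y) mod int p =
        (a * x mod int p) \<otimes>\<^bsub>integer_mod_group p\<^esub> (a * y mod int p)" by simp
    qed
  qed
  have "bij_betw (\<lambda>x. a * x mod int p) {0..<int p} {0..<int p}"
    unfolding bij_betw_def using mulmap_inj[OF assms] mulmap_surj[OF assms] by simp
  thus ?thesis using hom p0 by (simp add: iso_def carrier_imgp)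
qed

lemma iso_mulmap:
  assumes p: "Factorial_Ring.prime p" and f: "f \<in> iso (integer_mod_group p) (integer_mod_group p)"
  shows "\<exists>a\<in>{1..<int p}. \<forall>x\<in>{0..<int p}. f x = a * x mod int p"
proof -
  have p0: "p > 0" using prime_gt_0_nat[OF p] .
  have p2: "p \<ge> 2" using prime_ge_2_nat[OF p] .
  have C: "carrier (integer_mod_group p) = {0..<int p}" using p0 by (rule carrier_imgp)
  have fc: "\<And>x. x \<in> {0..<int p} \<Longrightarrow> f x \<in> {0..<int p}"
    using f C by (auto simp: iso_def hom_def)
  have fh: "\<And>x y. x \<in> {0..<int p} \<Longrightarrow> y \<in> {0..<int p} \<Longrightarrow> f ((x + y) mod int p) = (f x + f y) mod int p"
    using f C by (auto simp: iso_def hom_def)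
  have finj: "inj_on f {0..<int p}" using f C by (auto simp: iso_def bij_betw_def)
  define a where "a = f 1"
  have f0: "f 0 = 0"
  proof -
    have "f 0 = (f 0 + f 0) mod int p" using fh[of 0 0] p0 by simp
    moreover have "f 0 \<in> {0..<int p}" using fc p0 by simp
    ultimately have c: "f 0 = (f 0 + f 0) mod int p" "0 \<le> f 0" "f 0 < int p" by auto
    show ?thesis
    proof (cases "f 0 + f 0 < int p")
      case True
      hence "(f 0 + f 0) mod int p = f 0 + f 0" using c by (intro mod_pos_pos_trivial) auto
      thus ?thesis using c by linarith
    next
      case False
      have "(f 0 + f 0) mod int p = ((f 0 + f 0 - int p) + int p) mod int p" by simp
      also have "\<dots> = (f 0 + f 0 - int p) mod int p" by (rule mod_add_self2)
      also have "\<dots> = f 0 + f 0 - int p" using c False by (intro mod_pos_pos_trivial) auto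
      finally show ?thesis using c by linarith
    qed
  qed
  have a1: "a \<in> {0..<int p}" unfolding a_def using fc p2 by simp
  have ind: "j < p \<Longrightarrow> f (int j) = int j * a mod int p" for j
  proof (induction j)
    case 0 thus ?case using f0 by simp
  next
    case (Suc j)
    have "f (int (Suc j)) = f ((int j + 1) mod int p)" using Suc.prems by (simp add: add.commute)
    also have "\<dots> = (f (int j) + f 1) mod int p" using Suc.prems p2 by (intro fh) auto
    also have "\<dots> = (int j * a mod int p + a) mod int p" using Suc by (simp add: a_def)
    also have "\<dots> = (int j * a + a) mod int p" by (rule mod_add_left_eq)
    also have "int j * a + a = int (Suc j) * a" by (simp add: distrib_right)
    finally show ?case .
  qed
  have an0: "a \<noteq> 0"
  proof
    assume "a = 0"
    hence "f 1 = f 0" using f0 a_def by simp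
    hence "(1::int) = 0" using inj_onD[OF finj] p2 by force
    thus False by simp
  qed
  have "\<forall>x\<in>{0..<int p}. f x = a * x mod int p"
  proof
    fix x assume x: "x \<in> {0..<int p}"
    hence "nat x < p" "int (nat x) = x" by auto
    thus "f x = a * x mod int p" using ind[of "nat x"] by (simp add: mult.commute)
  qed
  moreover have "a \<in> {1..<int p}" using a1 an0 by auto
  ultimately show ?thesis by blast
qed

lemma aut_orbit_eq:
  assumes p: "Factorial_Ring.prime p" and S: "S \<subseteq> {0..<int p}"
  shows "aut_orbit (integer_mod_group p) S = {(\<lambda>x. a * x mod int p) ` S | a. a \<in> {1..<int p}}"
proof (intro equalityI subsetI)
  fix W assume "W \<in> aut_orbit (integer_mod_group p) S"
  then obtain f where f: "f \<in> iso (integer_mod_group p) (integer_mod_group p)" "W = f ` S"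
    by (auto simp: aut_orbit_def)
  obtain a where a: "a \<in> {1..<int p}" "\<forall>x\<in>{0..<int p}. f x = a * x mod int p"
    using iso_mulmap[OF p f(1)] by blast
  have "W = (\<lambda>x. a * x mod int p) ` S" using f(2) a(2) S by (auto intro!: image_cong)
  thus "W \<in> {(\<lambda>x. a * x mod int p) ` S | a. a \<in> {1..<int p}}" using a(1) by blast
next
  fix W assume "W \<in> {(\<lambda>x. a * x mod int p) ` S | a. a \<in> {1..<int p}}"
  then obtain a where "a \<in> {1..<int p}" "W = (\<lambda>x. a * x mod int p) ` S" by blast
  thus "W \<in> aut_orbit (integer_mod_group p) S" using mulmap_iso[OF p] by (auto simp: aut_orbit_def)
qed


locale prroot =
  fixes p g :: nat
  assumes prime: "Factorial_Ring.prime p" and odd: "odd p" and root: "residue_primroot p g"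
begin

definition nn :: nat where "nn = p - 1"
definition mm :: nat where "mm = nn div 2"
definition e :: "nat \<Rightarrow> int" where "e k = int g ^ k mod int p"

lemma p3: "p \<ge> 3"
proof -
  have "p \<ge> 2" using prime_ge_2_nat[OF prime] .
  moreover have "p \<noteq> 2" using odd by auto
  ultimately show ?thesis by linarith
qed

lemma nn_eq: "nn = 2 * mm" using odd p3 unfolding nn_def mm_def by (auto elim!: oddE)

lemma mm_pos: "mm > 0" using p3 unfolding nn_def mm_def by auto

lemma mm_less: "mm < nn" using nn_eq mm_pos by linarith

lemma nn_pos: "nn > 0" using mm_less by linarith

lemma not_dvd_g: "\<not> p dvd g"
proof
  assume "p dvd g"
  moreover have "coprime p g" using root by (simp add: residue_primroot_def)
  ultimately have "p dvd 1" by (meson coprime_common_divisor dvd_refl)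
  thus False using p3 by simp
qed

lemma gn: "int g ^ nn mod int p = 1"
proof -
  have "[g ^ (p - 1) = 1] (mod p)" using fermat_theorem[OF prime not_dvd_g] .
  hence "[int (g ^ nn) = int 1] (mod int p)" unfolding nn_def using cong_int_iff by blast
  hence "int g ^ nn mod int p = 1 mod int p" by (simp add: cong_def)
  thus ?thesis using p3 by simp
qed

lemma gpow: "int g ^ j mod int p = int g ^ (j mod nn) mod int p"
proof -
  have "int g ^ j = int g ^ (j mod nn) * (int g ^ nn) ^ (j div nn)"
    by (metis power_add power_mult mod_div_mult_eq mult.commute)
  hence "int g ^ j mod int p = (int g ^ (j mod nn) * ((int g ^ nn) ^ (j div nn) mod int p)) mod int p"
    by (simp add: mod_mult_right_eq)
  also have "(int g ^ nn) ^ (j div nn) mod int p = 1"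
  proof -
    have "(int g ^ nn) ^ (j div nn) mod int p = (int g ^ nn mod int p) ^ (j div nn) mod int p"
      by (simp add: power_mod)
    also have "\<dots> = 1" using gn p3 by simp
    finally show ?thesis .
  qed
  finally show ?thesis by simp
qed

lemma gm: "int g ^ mm mod int p = int p - 1"
proof -
  have ordg: "ord p g = nn"
    using root prime by (simp add: residue_primroot_def totient_prime nn_def)
  have ncong: "\<not> [g ^ mm = 1] (mod p)"
  proof
    assume "[g ^ mm = 1] (mod p)"
    hence "nn dvd mm" using ord_divides[of g mm p] ordg by simp
    thus False using mm_pos mm_less by (simp add: nat_dvd_not_less)
  qed
  have pi: "Factorial_Ring.prime (int p)" using prime by simp
  have "int p dvd int g ^ nn - 1" using gn mod_eq_dvd_iff[of "int g ^ nn" "int p" 1] p3 by simp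
  moreover have "int g ^ nn - 1 = (int g ^ mm - 1) * (int g ^ mm + 1)"
    using nn_eq by (simp add: power_mult algebra_simps power2_eq_square)
  ultimately have "int p dvd (int g ^ mm - 1) * (int g ^ mm + 1)" by simp
  hence "int p dvd int g ^ mm - 1 \<or> int p dvd int g ^ mm + 1"
    using prime_dvd_mult_iff[OF pi] by blast
  moreover have "\<not> int p dvd int g ^ mm - 1"
  proof
    assume "int p dvd int g ^ mm - 1"
    hence "[int g ^ mm = 1] (mod int p)" by (simp add: cong_iff_dvd_diff)
    hence "[int (g ^ mm) = int 1] (mod int p)" by simp
    hence "[g ^ mm = 1] (mod p)" using cong_int_iff by blast
    thus False using ncong by simp
  qed
  ultimately have "int p dvd int g ^ mm - (-1)" by simp
  hence "int g ^ mm mod int p = (-1) mod int p" using mod_eq_dvd_iff by blast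
  also have "(-1) mod int p = int p - 1" using p3 by (simp add: zmod_minus1)
  finally show ?thesis .
qed

lemma e_mul: "(e t * e k) mod int p = e ((k + t) mod nn)"
proof -
  have "(e t * e k) mod int p = (int g ^ t * int g ^ k) mod int p"
    unfolding e_def by (rule mod_mult_eq)
  also have "\<dots> = int g ^ (k + t) mod int p" by (simp add: power_add mult.commute)
  also have "\<dots> = e ((k + t) mod nn)" unfolding e_def by (rule gpow)
  finally show ?thesis .
qed

lemma e_neg: "(- e k) mod int p = e ((k + mm) mod nn)"
proof -
  have "(- e k) mod int p = (- (int g ^ k)) mod int p"
    unfolding e_def by (rule mod_minus_eq)
  also have "\<dots> = (int g ^ k * (int g ^ mm mod int p)) mod int p"
  proof -
    have "int p dvd (- (int g ^ k)) - int g ^ k * (int p - 1)"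
      by (simp add: algebra_simps)
    thus ?thesis using gm mod_eq_dvd_iff by metis
  qed
  also have "\<dots> = int g ^ (k + mm) mod int p" by (simp add: mod_mult_right_eq power_add)
  also have "\<dots> = e ((k + mm) mod nn)" unfolding e_def by (rule gpow)
  finally show ?thesis .
qed

lemma e_bij: "bij_betw e {..<nn} {1..<int p}"
proof -
  have p1: "p > 1" using p3 by simp
  have b: "bij_betw (\<lambda>i. g ^ i mod p) {..<nn} {0<..<p}"
    using residue_primroot_is_generator[OF p1 root] prime
    by (simp add: totient_prime totatives_prime nn_def)
  have bi: "bij_betw int {0<..<p} {1..<int p}"
    unfolding bij_betw_def
  proof
    show "inj_on int {0<..<p}" by simp
    show "int ` {0<..<p} = {1..<int p}"
    proof (intro equalityI subsetI)
      fix y assume "y \<in> int ` {0<..<p}" thus "y \<in> {1..<int p}" by auto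
    next
      fix y assume y: "y \<in> {1..<int p}"
      hence "nat y \<in> {0<..<p}" "y = int (nat y)" by auto
      thus "y \<in> int ` {0<..<p}" by blast
    qed
  qed
  have "bij_betw (int \<circ> (\<lambda>i. g ^ i mod p)) {..<nn} {1..<int p}" by (rule bij_betw_trans[OF b bi])
  moreover have "int \<circ> (\<lambda>i. g ^ i mod p) = e"
    by (rule ext) (simp add: e_def of_nat_mod)
  ultimately show ?thesis by simp
qed

end

context prroot
begin

abbreviation G where "G \<equiv> integer_mod_group p"

lemma carG: "carrier G = {0..<int p}" using p3 by (simp add: carrier_integer_mod_group)

lemma cayley_char:
  "S \<in> cayley_sets G \<longleftrightarrow> S \<subseteq> {1..<int p} \<and> S \<noteq> {} \<and> (\<lambda>x. (- x) mod int p) ` S = S"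
proof -
  interpret grp: group G by simp
  have one: "(1::int) \<in> carrier G" using p3 carG by simp
  have invimg: "(\<lambda>x. inv\<^bsub>G\<^esub> x) ` S = (\<lambda>x. (- x) mod int p) ` S" if "S \<subseteq> carrier G"
  proof (rule image_cong[OF refl])
    fix x assume "x \<in> S" thus "inv\<^bsub>G\<^esub> x = (- x) mod int p"
      using that by (intro inv_integer_mod_group) blast
  qed
  show ?thesis
  proof
    assume S: "S \<in> cayley_sets G"
    hence S1: "S \<subseteq> carrier G" "(\<lambda>x. inv\<^bsub>G\<^esub> x) ` S = S" "generate G S = carrier G" "0 \<notin> S"
      by (auto simp: cayley_sets_def)
    have "S \<noteq> {}"
    proof
      assume "S = {}"
      hence "carrier G = {0}" using S1(3) grp.generate_empty by simp
      thus False using one by simp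
    qed
    moreover have "S \<subseteq> {1..<int p}"
    proof
      fix x assume "x \<in> S"
      hence "x \<in> carrier G" "x \<noteq> 0" using S1(1,4) by blast+
      hence "x \<in> {0..<int p}" "x \<noteq> 0" using carG by simp_all
      thus "x \<in> {1..<int p}" by auto
    qed
    ultimately show "S \<subseteq> {1..<int p} \<and> S \<noteq> {} \<and> (\<lambda>x. (- x) mod int p) ` S = S"
      using S1(2) invimg[OF S1(1)] by simp
  next
    assume S: "S \<subseteq> {1..<int p} \<and> S \<noteq> {} \<and> (\<lambda>x. (- x) mod int p) ` S = S"
    have Sc: "S \<subseteq> carrier G" using S carG by auto
    obtain a where a: "a \<in> S" using S by blast
    have a1: "a \<in> {1..<int p}" using a S by auto
    have gen: "generate G S = carrier G"
    proof (rule equalityI)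
      show "generate G S \<subseteq> carrier G" by (rule grp.generate_incl[OF Sc])
      show "carrier G \<subseteq> generate G S"
      proof
        fix y assume "y \<in> carrier G"
        hence "y \<in> (\<lambda>x. a * x mod int p) ` {0..<int p}" using mulmap_surj[OF prime a1] carG by simp
        then obtain x where x: "y = a * x mod int p" by blast
        have ac: "a \<in> carrier G" using a Sc by auto
        have "y = a [^]\<^bsub>G\<^esub> x" using x by (simp add: int_pow_integer_mod_group mult.commute)
        hence "y \<in> generate G {a}" using grp.generate_pow[OF ac] by blast
        moreover have "generate G {a} \<subseteq> generate G S" using a by (intro grp.mono_generate) auto
        ultimately show "y \<in> generate G S" by blast
      qed
    qed
    have z: "0 \<notin> S"
    proof
      assume "0 \<in> S" hence "(0::int) \<in> {1..<int p}" using S by blast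
      thus False by simp
    qed
    have invS: "(\<lambda>x. inv\<^bsub>G\<^esub> x) ` S = S"
    proof -
      have neg: "(\<lambda>x. (- x) mod int p) ` S = S" using S by blast
      show ?thesis using invimg[OF Sc] neg by (rule trans)
    qed
    show "S \<in> cayley_sets G"
      unfolding cayley_sets_def using Sc gen z invS by simp
  qed
qed

lemma einj: "inj_on e {..<nn}" using e_bij by (simp add: bij_betw_def)
lemma eimg: "e ` {..<nn} = {1..<int p}" using e_bij by (simp add: bij_betw_def)

lemma Eimg_inj: "inj_on (image e) (Pow {..<nn})"
  using inj_on_image[of e "Pow {..<nn}"] einj by simp

lemma e_sh: "e (sh nn t k) = (e t * e k) mod int p"
  by (simp add: sh_def e_mul)

lemma e_shm: "e (sh nn mm k) = (- e k) mod int p"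
  by (simp add: sh_def e_neg)

lemma img_mul: "(\<lambda>x. e t * x mod int p) ` (e ` T) = e ` (sh nn t ` T)"
  by (simp add: image_image e_sh)

lemma img_neg: "(\<lambda>x. (- x) mod int p) ` (e ` T) = e ` (sh nn mm ` T)"
  by (simp add: image_image e_shm)

lemma cayley_k: "{S \<in> cayley_sets G. card S = k} = image e ` {T\<in>Ys nn mm. card T = k}"
proof (intro equalityI subsetI)
  fix S assume "S \<in> {S \<in> cayley_sets G. card S = k}"
  hence S: "S \<subseteq> {1..<int p}" "S \<noteq> {}" "(\<lambda>x. (- x) mod int p) ` S = S" "card S = k"
    using cayley_char by auto
  define T where "T = {j\<in>{..<nn}. e j \<in> S}"
  have Ts: "T \<subseteq> {..<nn}" by (auto simp: T_def)
  have ST: "S = e ` T"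
  proof (intro equalityI subsetI)
    fix y assume "y \<in> S"
    hence "y \<in> e ` {..<nn}" using S eimg by auto
    then obtain j where "j < nn" "y = e j" by auto
    thus "y \<in> e ` T" using \<open>y \<in> S\<close> by (auto simp: T_def)
  qed (auto simp: T_def)
  have shs: "sh nn mm ` T \<subseteq> {..<nn}" using sh_img_sub[OF nn_pos] .
  have "e ` (sh nn mm ` T) = e ` T" using S(3) ST img_neg by simp
  hence "sh nn mm ` T = T" using inj_onD[OF Eimg_inj] shs Ts by blast
  moreover have "T \<noteq> {}" using ST S(2) by auto
  moreover have "card T = k" using ST S(4) card_image[OF inj_on_subset[OF einj Ts]] by simp
  ultimately have "T \<in> {T\<in>Ys nn mm. card T = k}" using Ts by (simp add: Ys_def)
  thus "S \<in> image e ` {T\<in>Ys nn mm. card T = k}" using ST by blast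
next
  fix S assume "S \<in> image e ` {T\<in>Ys nn mm. card T = k}"
  then obtain T where T: "T \<subseteq> {..<nn}" "T \<noteq> {}" "sh nn mm ` T = T" "card T = k" "S = e ` T"
    by (auto simp: Ys_def)
  have "S \<subseteq> {1..<int p}" using T(1,5) eimg by auto
  moreover have "S \<noteq> {}" using T by auto
  moreover have "(\<lambda>x. (- x) mod int p) ` S = S" using T(3,5) img_neg by simp
  moreover have "card S = k" using T card_image[OF inj_on_subset[OF einj T(1)]] by simp
  ultimately show "S \<in> {S \<in> cayley_sets G. card S = k}" using cayley_char by simp
qed

lemma aut_orbit_e:
  assumes T: "T \<subseteq> {..<nn}"
  shows "aut_orbit G (e ` T) = image e ` orbs nn T"
proof -
  have "e ` T \<subseteq> e ` {..<nn}" using T by (rule image_mono)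
  hence ET: "e ` T \<subseteq> {0..<int p}" using eimg by auto
  have "aut_orbit G (e ` T) = {(\<lambda>x. a * x mod int p) ` (e ` T) | a. a \<in> {1..<int p}}"
    by (rule aut_orbit_eq[OF prime ET])
  also have "\<dots> = {e ` (sh nn t ` T) | t. t < nn}"
  proof (intro equalityI subsetI)
    fix W assume "W \<in> {(\<lambda>x. a * x mod int p) ` (e ` T) | a. a \<in> {1..<int p}}"
    then obtain a where a: "a \<in> {1..<int p}" "W = (\<lambda>x. a * x mod int p) ` (e ` T)" by blast
    have "a \<in> e ` {..<nn}" using a(1) eimg by simp
    then obtain t where t: "t < nn" "a = e t" by auto
    have "W = e ` (sh nn t ` T)" using a(2) t(2) img_mul[of t T] by simp
    thus "W \<in> {e ` (sh nn t ` T) | t. t < nn}" using t(1) by blast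
  next
    fix W assume "W \<in> {e ` (sh nn t ` T) | t. t < nn}"
    then obtain t where t: "t < nn" "W = e ` (sh nn t ` T)" by blast
    have et: "e t \<in> {1..<int p}" using t eimg by blast
    have "W = (\<lambda>x. e t * x mod int p) ` (e ` T)" using t(2) img_mul[of t T] by simp
    thus "W \<in> {(\<lambda>x. a * x mod int p) ` (e ` T) | a. a \<in> {1..<int p}}" using et by blast
  qed
  also have "\<dots> = image e ` orbs nn T" by (auto simp: orbs_def)
  finally show ?thesis .
qed

lemma weak_count_eq: "weak_count G k = card (orbs nn ` {T\<in>Ys nn mm. card T = k})"
proof -
  let ?Y = "{T\<in>Ys nn mm. card T = k}"
  have "aut_orbit G ` {S \<in> cayley_sets G. card S = k} = aut_orbit G ` image e ` ?Y"
    by (simp add: cayley_k)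
  also have "\<dots> = (\<lambda>T. image e ` orbs nn T) ` ?Y"
    unfolding image_image by (rule image_cong[OF refl]) (rule aut_orbit_e, simp add: Ys_def)
  also have "\<dots> = image (image e) ` (orbs nn ` ?Y)" by (simp add: image_image)
  finally have eq: "aut_orbit G ` {S \<in> cayley_sets G. card S = k} = image (image e) ` (orbs nn ` ?Y)" .
  have sub: "\<Union> (orbs nn ` ?Y) \<subseteq> Pow {..<nn}"
    using sh_img_sub[OF nn_pos] by (auto simp: orbs_def)
  have "inj_on (image (image e)) (orbs nn ` ?Y)"
    by (rule inj_on_image) (rule inj_on_subset[OF Eimg_inj sub])
  thus ?thesis unfolding weak_count_def eq by (rule card_image)
qed

end

context prroot
begin

lemma card_G: "card (carrier G) = p" using carG by simp

lemma Psi_eq: "Psi_w G x = 2 / real nn * (\<Sum>d | d dvd mm. real (totient (mm div d)) * ((1 + x ^ (nn div d)) ^ d - 1))"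
proof -
  have "Psi_w G x = (\<Sum>k = 1..nn. real (card (orbs nn ` {T\<in>Ys nn mm. card T = k})) * x ^ k)"
    unfolding Psi_w_def card_G nn_def[symmetric] by (simp add: weak_count_eq)
  also have "\<dots> = 2 / real nn * (\<Sum>d | d dvd mm. real (totient (mm div d)) * ((1 + x ^ (nn div d)) ^ d - 1))"
    by (rule comb_main[OF nn_eq mm_pos])
  finally show ?thesis .
qed

lemma Ew_eq: "real (E_w G) = Psi_w G 1"
  unfolding E_w_def Psi_w_def by simp

end

theorem corollary5p1:
  fixes p :: nat
  assumes "Factorial_Ring.prime p" and "odd p"
  shows "(\<forall>x::real. Psi_w (integer_mod_group p) x =
            2 / (real p - 1) * (\<Sum>d | d dvd (p - 1) div 2.
               real (totient ((p - 1) div (2 * d))) * ((1 + x ^ ((p - 1) div d)) ^ d - 1)))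
         \<and> real (E_w (integer_mod_group p)) = Psi_w (integer_mod_group p) 1
         \<and> real (E_w (integer_mod_group p)) =
            2 / (real p - 1) * (\<Sum>d | d dvd (p - 1) div 2.
               real (totient ((p - 1) div (2 * d))) * (2 ^ d - 1))"
proof -
  have p1: "p > 1" using prime_gt_1_nat[OF assms(1)] .
  obtain g where g: "residue_primroot p g" using prime_primitive_root_exists[OF p1 assms(1)] by blast
  interpret prroot p g using assms g by unfold_locales
  have rn: "real nn = real p - 1" using p3 by (simp add: nn_def)
  have dv: "(p - 1) div (2 * d) = mm div d" for d by (simp add: mm_def nn_def div_mult2_eq)
  have A: "Psi_w G x = 2 / (real p - 1) * (\<Sum>d | d dvd (p - 1) div 2.
               real (totient ((p - 1) div (2 * d))) * ((1 + x ^ ((p - 1) div d)) ^ d - 1))" for x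
    using Psi_eq[of x] unfolding rn dv by (simp add: mm_def nn_def)
  have B: "real (E_w G) = Psi_w G 1" by (rule Ew_eq)
  have C: "Psi_w G 1 = 2 / (real p - 1) * (\<Sum>d | d dvd (p - 1) div 2.
               real (totient ((p - 1) div (2 * d))) * (2 ^ d - 1))"
    using A[of 1] by simp
  show ?thesis using A B C by simp
qed


end
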